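(* Let $0\neq h\in\mathbb{F}[x]$ and let $u_1,\dots,u_\ell$ be the distinct monic irreducible factors of $h$ in $\mathbb{F}[x]$ that are not central in $A_h$. Then an element $v\in A_h$ is normal (i.e. $vA_h=A_hv$) if and only if $v=u_1^{\beta_1}\cdots u_\ell^{\beta_\ell}z$ for some integers $\beta_i\ge0$ and some $z$ in the center $Z(A_h)$. If $\mathrm{char}(\mathbb{F})=p>0$, the exponents may moreover be chosen with $0\le\beta_i<p$ for all $i$.
   Context: $\mathbb{F}$ is an arbitrary field. For $h\in\mathbb{F}[x]$, $A_h$ is the unital associative $\mathbb{F}$-algebra generated by $x,\hat y$ with defining relation $\hat yx-x\hat y=h$; $\mathbb{F}[x]$ is a subalgebra of $A_h$. An irreducible factor $u$ of $h$ is central in $A_h$ iff $u'=0$. *)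

theory Defs
  imports "HOL-Computational_Algebra.Polynomial"
begin

text \<open>Concrete model of A_h = F<x, y | y x - x y = h>.
  By the PBW-type normal form, every element of A_h is uniquely
  sum_i f_i y^i with f_i in F[x]; we represent it by the polynomial
  in y with coefficients in F[x], i.e. a term of type 'a poly poly
  (coefficient i is f_i).  The relation y f = f y + h f' extends to
  y^i f = sum_k (i choose k) D^k(f) y^(i-k) with D(f) = h * f'.\<close>

definition Dh :: "'a::field poly \<Rightarrow> 'a poly \<Rightarrow> 'a poly" where
  "Dh h f = h * pderiv f"

definition ypow_mult :: "'a::field poly \<Rightarrow> nat \<Rightarrow> 'a poly \<Rightarrow> 'a poly poly" where
  "ypow_mult h i f =
     (\<Sum>k\<le>i. monom (smult (of_nat (i choose k)) ((Dh h ^^ k) f)) (i - k))"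

text \<open>Multiplication of A_h:
  (sum_i f_i y^i)(sum_j g_j y^j) = sum_{i,j} f_i (y^i g_j) y^j\<close>
definition Amult :: "'a::field poly \<Rightarrow> 'a poly poly \<Rightarrow> 'a poly poly \<Rightarrow> 'a poly poly" where
  "Amult h P Q =
     (\<Sum>i\<le>degree P. \<Sum>j\<le>degree Q.
        smult (coeff P i) (ypow_mult h i (coeff Q j)) * monom 1 j)"

definition Aemb :: "'a::field poly \<Rightarrow> 'a poly poly" where
  "Aemb f = [:f:]"

definition Acenter :: "'a::field poly \<Rightarrow> 'a poly poly set" where
  "Acenter h = {z. \<forall>a. Amult h z a = Amult h a z}"

definition Anormal :: "'a::field poly \<Rightarrow> 'a poly poly \<Rightarrow> bool" where
  "Anormal h v \<longleftrightarrow> {Amult h v a | a. True} = {Amult h a v | a. True}"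

definition noncentral_factors :: "'a::field poly \<Rightarrow> 'a poly set" where
  "noncentral_factors h =
     {u. irreducible u \<and> lead_coeff u = 1 \<and> u dvd h \<and> Aemb u \<notin> Acenter h}"

end

theory Submission
  imports Defs "HOL-Computational_Algebra.Computational_Algebra"
begin

definition Lop :: "'a::field poly \<Rightarrow> 'a poly poly \<Rightarrow> 'a poly poly" where
  "Lop h Q = pCons 0 Q + map_poly (Dh h) Q"

definition Mop :: "'a::field poly \<Rightarrow> 'a poly poly \<Rightarrow> 'a poly poly \<Rightarrow> 'a poly poly" where
  "Mop h P Q = (\<Sum>i\<le>degree P. smult (coeff P i) ((Lop h ^^ i) Q))"

lemma Dh_0[simp]: "Dh h 0 = 0" by (simp add: Dh_def)
lemma Dh_add: "Dh h (f + g) = Dh h f + Dh h g" by (simp add: Dh_def pderiv_add algebra_simps)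
lemma Dh_diff: "Dh h (f - g) = Dh h f - Dh h g" by (simp add: Dh_def pderiv_diff algebra_simps)
lemma Dh_mult: "Dh h (f * g) = Dh h f * g + f * Dh h g" by (simp add: Dh_def pderiv_mult algebra_simps)
lemma Dh_const[simp]: "Dh h [:c:] = 0" by (simp add: Dh_def)
lemma Dh_smult: "Dh h (smult a f) = smult a (Dh h f)" by (simp add: Dh_def pderiv_smult)
lemma Dh_pow_smult: "(Dh h ^^ k) (smult a f) = smult a ((Dh h ^^ k) f)"
  by (induction k) (auto simp: Dh_smult)
lemma Dh_pow_0[simp]: "(Dh h ^^ k) 0 = 0"
  by (induction k) auto

lemma coeff_Lop: "coeff (Lop h Q) n = (if n = 0 then 0 else coeff Q (n - 1)) + Dh h (coeff Q n)"
  by (cases n) (auto simp: Lop_def coeff_map_poly)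

lemma Lop_add: "Lop h (P + Q) = Lop h P + Lop h Q"
  by (rule poly_eqI) (simp add: coeff_Lop Dh_add)
lemma Lop_diff: "Lop h (P - Q) = Lop h P - Lop h Q"
  by (rule poly_eqI) (simp add: coeff_Lop Dh_diff)
lemma Lop_0[simp]: "Lop h 0 = 0"
  by (rule poly_eqI) (simp add: coeff_Lop)
lemma Lop_smult: "Lop h (smult c Q) = smult c (Lop h Q) + smult (Dh h c) Q"
  by (rule poly_eqI) (simp add: coeff_Lop Dh_mult algebra_simps)
lemma Lop_monom_mult: "Lop h (monom 1 j * Q) = monom 1 j * Lop h Q"
  by (rule poly_eqI) (auto simp: coeff_Lop coeff_monom_mult)

lemma Lopi_add: "(Lop h ^^ i) (P + Q) = (Lop h ^^ i) P + (Lop h ^^ i) Q"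
  by (induction i) (auto simp: Lop_add)
lemma Lopi_diff: "(Lop h ^^ i) (P - Q) = (Lop h ^^ i) P - (Lop h ^^ i) Q"
  by (induction i) (auto simp: Lop_diff)
lemma Lopi_0[simp]: "(Lop h ^^ i) 0 = 0"
  by (induction i) auto
lemma Lopi_sum: "(Lop h ^^ i) (\<Sum>j\<in>A. f j) = (\<Sum>j\<in>A. (Lop h ^^ i) (f j))"
  by (induction A rule: infinite_finite_induct) (auto simp: Lopi_add)
lemma Lopi_monom_mult: "(Lop h ^^ i) (monom 1 j * Q) = monom 1 j * (Lop h ^^ i) Q"
  by (induction i) (auto simp: Lop_monom_mult)

lemma coeff_ypow:
  "coeff (ypow_mult h i f) m =
     (if m \<le> i then smult (of_nat (i choose m)) ((Dh h ^^ (i-m)) f) else 0)"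
proof (cases "m \<le> i")
  case True
  have "coeff (ypow_mult h i f) m =
     (\<Sum>k\<le>i. if k = i - m then smult (of_nat (i choose k)) ((Dh h ^^ k) f) else 0)"
    unfolding ypow_mult_def coeff_sum coeff_monom
    by (rule sum.cong) (use True in auto)
  also have "\<dots> = smult (of_nat (i choose (i - m))) ((Dh h ^^ (i - m)) f)"
    by (subst sum.delta) auto
  finally show ?thesis using True by (simp add: binomial_symmetric[OF True, symmetric])
next
  case False
  then show ?thesis unfolding ypow_mult_def coeff_sum coeff_monom
    by (auto intro!: sum.neutral)
qed

lemma coeff_Lopi_const:
  "coeff ((Lop h ^^ i) [:f:]) m =
     (if m \<le> i then smult (of_nat (i choose m)) ((Dh h ^^ (i-m)) f) else 0)"
proof (induction i arbitrary: m)
  case 0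
  then show ?case by (cases m) auto
next
  case (Suc i)
  have e: "(Lop h ^^ Suc i) [:f:] = Lop h ((Lop h ^^ i) [:f:])" by simp
  show ?case
  proof (cases m)
    case 0
    then show ?thesis unfolding e coeff_Lop Suc.IH by (simp add: Dh_smult)
  next
    case (Suc m')
    show ?thesis
    proof (cases "m' < i")
      case True
      have "Suc i - Suc m' = Suc (i - Suc m')" using True by simp
      moreover have "i - m' = Suc (i - Suc m')" using True by simp
      ultimately show ?thesis unfolding e coeff_Lop Suc.IH using True \<open>m = Suc m'\<close>
        by (simp add: Dh_smult Dh_pow_smult smult_add_left[symmetric] del: smult_add_left)
    next
      case False
      then show ?thesis unfolding e coeff_Lop Suc.IH using \<open>m = Suc m'\<close>
        by (auto simp: Dh_smult)
    qed
  qed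
qed

lemma Lopi_const: "(Lop h ^^ i) [:f:] = ypow_mult h i f"
  by (rule poly_eqI) (simp add: coeff_Lopi_const coeff_ypow)

lemma smult_sum_right: "smult c (\<Sum>i\<in>A. f i) = (\<Sum>i\<in>A. smult c (f i))"
  by (induction A rule: infinite_finite_induct) (auto simp: smult_add_right)

lemma Lopi_expand:
  "(Lop h ^^ i) Q = (\<Sum>j\<le>degree Q. monom 1 j * ypow_mult h i (coeff Q j))"
proof -
  have "Q = (\<Sum>j\<le>degree Q. monom 1 j * [:coeff Q j:])"
    by (subst (1) poly_as_sum_of_monoms[symmetric])
       (simp add: mult_monom monom_0[symmetric] del: monom_0)
  then have "(Lop h ^^ i) Q = (Lop h ^^ i) (\<Sum>j\<le>degree Q. monom 1 j * [:coeff Q j:])" by simp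
  also have "\<dots> = (\<Sum>j\<le>degree Q. monom 1 j * ypow_mult h i (coeff Q j))"
    by (simp only: Lopi_sum Lopi_monom_mult Lopi_const)
  finally show ?thesis .
qed

lemma Amult_Mop: "Amult h P Q = Mop h P Q"
  unfolding Amult_def Mop_def Lopi_expand smult_sum_right
  by (simp add: mult_smult_left mult.commute)

lemma Mop_bound:
  assumes "degree P \<le> N"
  shows "Mop h P Q = (\<Sum>i\<le>N. smult (coeff P i) ((Lop h ^^ i) Q))"
  unfolding Mop_def
  by (rule sum.mono_neutral_left) (use assms in \<open>auto simp: coeff_eq_0\<close>)

lemma Mop_add_left: "Mop h (P + P') Q = Mop h P Q + Mop h P' Q"
proof -
  let ?N = "max (degree P) (degree P')"
  have d: "degree (P + P') \<le> ?N" by (rule degree_add_le) auto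
  show ?thesis
    by (simp add: Mop_bound[OF d] Mop_bound[of P ?N] Mop_bound[of P' ?N]
          smult_add_left sum.distrib)
qed

lemma Mop_smult_left: "Mop h (smult f P) Q = smult f (Mop h P Q)"
  by (simp add: Mop_bound[OF degree_smult_le] Mop_def smult_sum_right)

lemma Mop_zero_left[simp]: "Mop h 0 Q = 0"
  by (simp add: Mop_def)

lemma Mop_sum_left: "Mop h (\<Sum>i\<in>A. P i) Q = (\<Sum>i\<in>A. Mop h (P i) Q)"
  by (induction A rule: infinite_finite_induct) (auto simp: Mop_add_left)

lemma Mop_add_right: "Mop h P (Q + Q') = Mop h P Q + Mop h P Q'"
  by (simp add: Mop_def Lopi_add smult_add_right sum.distrib)

lemma Mop_diff_right: "Mop h P (Q - Q') = Mop h P Q - Mop h P Q'"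
  by (simp add: Mop_def Lopi_diff smult_diff_right sum_subtractf)

lemma Mop_zero_right[simp]: "Mop h P 0 = 0"
  by (simp add: Mop_def)

lemma Mop_monom: "Mop h (monom p i) Q = smult p ((Lop h ^^ i) Q)"
proof -
  have d: "degree (monom p i) \<le> i" by (simp add: degree_monom_le)
  have "(\<Sum>ia\<le>i. smult (coeff (monom p i) ia) ((Lop h ^^ ia) Q)) =
     (\<Sum>ia\<le>i. if ia = i then smult p ((Lop h ^^ ia) Q) else 0)"
    by (rule sum.cong) (auto simp: coeff_monom)
  then show ?thesis unfolding Mop_bound[OF d] by simp
qed

lemma Mop_const: "Mop h [:f:] Q = smult f Q"
  using Mop_monom[of h f 0 Q, unfolded monom_0] by simp

lemma Mop_expand: "Mop h P Q = (\<Sum>i\<le>degree P. Mop h (monom (coeff P i) i) Q)"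
  unfolding Mop_monom by (simp add: Mop_def)

lemma Lop_monom: "Lop h (monom p i) = monom p (Suc i) + monom (Dh h p) i"
  by (rule poly_eqI) (auto simp: coeff_Lop coeff_monom)

lemma Lop_sum: "Lop h (\<Sum>i\<in>A. f i) = (\<Sum>i\<in>A. Lop h (f i))"
  by (induction A rule: infinite_finite_induct) (auto simp: Lop_add)

lemma Lop_Mop: "Lop h (Mop h P Q) = Mop h (Lop h P) Q"
proof -
  have "Lop h (Mop h P Q) = (\<Sum>i\<le>degree P. Lop h (smult (coeff P i) ((Lop h ^^ i) Q)))"
    by (simp add: Mop_def Lop_sum)
  also have "\<dots> = (\<Sum>i\<le>degree P. Mop h (Lop h (monom (coeff P i) i)) Q)"
    by (intro sum.cong refl)
       (simp add: Lop_smult Lop_monom Mop_add_left Mop_monom)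
  also have "\<dots> = Mop h (Lop h (\<Sum>i\<le>degree P. monom (coeff P i) i)) Q"
    by (simp add: Lop_sum Mop_sum_left)
  finally show ?thesis by (simp add: poly_as_sum_of_monoms)
qed

lemma Mop_Lopi: "Mop h ((Lop h ^^ i) Q) R = (Lop h ^^ i) (Mop h Q R)"
  by (induction i) (auto simp: Lop_Mop[symmetric])

lemma Mop_assoc: "Mop h (Mop h P Q) R = Mop h P (Mop h Q R)"
proof -
  have "Mop h (Mop h P Q) R = (\<Sum>i\<le>degree P. smult (coeff P i) (Mop h ((Lop h ^^ i) Q) R))"
    unfolding Mop_def[of h P Q] by (simp add: Mop_sum_left Mop_smult_left)
  also have "\<dots> = Mop h P (Mop h Q R)"
    by (simp add: Mop_Lopi Mop_def[of h P])
  finally show ?thesis .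
qed

lemma Amult_assoc: "Amult h (Amult h P Q) R = Amult h P (Amult h Q R)"
  by (simp add: Amult_Mop Mop_assoc)

lemma deg_Lop:
  assumes "Q \<noteq> 0"
  shows "degree (Lop h Q) = Suc (degree Q) \<and> coeff (Lop h Q) (Suc (degree Q)) = lead_coeff Q"
proof -
  have c: "coeff (Lop h Q) (Suc (degree Q)) = lead_coeff Q"
    by (simp add: coeff_Lop coeff_eq_0)
  have "degree (Lop h Q) \<le> Suc (degree Q)"
    by (rule degree_le) (auto simp: coeff_Lop coeff_eq_0)
  moreover have "Suc (degree Q) \<le> degree (Lop h Q)"
    by (rule le_degree) (use c assms in simp)
  ultimately show ?thesis using c by simp
qed

lemma deg_Lopi:
  assumes "Q \<noteq> 0"
  shows "degree ((Lop h ^^ i) Q) = degree Q + i \<and> coeff ((Lop h ^^ i) Q) (degree Q + i) = lead_coeff Q"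
proof (induction i)
  case 0
  then show ?case by simp
next
  case (Suc i)
  have "(Lop h ^^ i) Q \<noteq> 0"
  proof
    assume "(Lop h ^^ i) Q = 0"
    then show False using Suc assms by simp
  qed
  from deg_Lop[OF this, of h] Suc show ?case by simp
qed

lemma coeff_Mop: "coeff (Mop h P Q) k = (\<Sum>i\<le>degree P. coeff P i * coeff ((Lop h ^^ i) Q) k)"
  by (simp add: Mop_def coeff_sum)

lemma Mop_degree:
  assumes "P \<noteq> 0" "Q \<noteq> 0"
  shows "degree (Mop h P Q) = degree P + degree Q \<and>
         lead_coeff (Mop h P Q) = lead_coeff P * lead_coeff Q"
proof -
  let ?n = "degree P" and ?m = "degree Q"
  have c: "coeff (Mop h P Q) (?n + ?m) = lead_coeff P * lead_coeff Q"
  proof -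
    have "coeff (Mop h P Q) (?n + ?m) =
      (\<Sum>i\<le>?n. if i = ?n then lead_coeff P * lead_coeff Q else 0)"
      unfolding coeff_Mop
    proof (rule sum.cong[OF refl])
      fix i assume "i \<in> {..?n}"
      then have "i \<le> ?n" by simp
      show "coeff P i * coeff ((Lop h ^^ i) Q) (?n + ?m) =
            (if i = ?n then lead_coeff P * lead_coeff Q else 0)"
      proof (cases "i = ?n")
        case True
        then show ?thesis using deg_Lopi[OF assms(2), where h=h and i=i] by (simp add: add.commute)
      next
        case False
        then have "degree ((Lop h ^^ i) Q) < ?n + ?m"
          using deg_Lopi[OF assms(2), where h=h and i=i] \<open>i \<le> ?n\<close> by simp
        then show ?thesis using False by (simp add: coeff_eq_0)
      qed
    qed
    then show ?thesis by simp
  qed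
  have "degree (Mop h P Q) \<le> ?n + ?m"
  proof (rule degree_le, intro allI impI)
    fix k assume k: "?n + ?m < k"
    show "coeff (Mop h P Q) k = 0" unfolding coeff_Mop
    proof (rule sum.neutral, intro ballI)
      fix i assume "i \<in> {..?n}"
      then have "degree ((Lop h ^^ i) Q) < k"
        using deg_Lopi[OF assms(2), where h=h and i=i] k by simp
      then show "coeff P i * coeff ((Lop h ^^ i) Q) k = 0" by (simp add: coeff_eq_0)
    qed
  qed
  moreover have "?n + ?m \<le> degree (Mop h P Q)"
    by (rule le_degree) (use c assms in simp)
  ultimately show ?thesis using c by simp
qed

lemma Amult_degree:
  assumes "P \<noteq> 0" "Q \<noteq> 0"
  shows "degree (Amult h P Q) = degree P + degree Q \<and>
         lead_coeff (Amult h P Q) = lead_coeff P * lead_coeff Q"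
  unfolding Amult_Mop using Mop_degree[OF assms, where h=h] .

lemma Amult_nonzero: "P \<noteq> 0 \<Longrightarrow> Q \<noteq> 0 \<Longrightarrow> Amult h P Q \<noteq> 0"
  using Amult_degree[of P Q h] by (metis leading_coeff_0_iff mult_eq_0_iff)

lemma Dh_pow_const: "(Dh h ^^ k) [:c:] = (if k = 0 then [:c:] else 0)"
  by (induction k) auto

lemma Lopi_cc: "(Lop h ^^ i) [:[:c:]:] = monom [:c:] i"
  by (rule poly_eqI) (auto simp: coeff_Lopi_const coeff_monom Dh_pow_const)

lemma Amult_add_left: "Amult h (P + P') Q = Amult h P Q + Amult h P' Q"
  by (simp add: Amult_Mop Mop_add_left)
lemma Amult_add_right: "Amult h P (Q + Q') = Amult h P Q + Amult h P Q'"
  by (simp add: Amult_Mop Mop_add_right)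
lemma Amult_diff_right: "Amult h P (Q - Q') = Amult h P Q - Amult h P Q'"
  by (simp add: Amult_Mop Mop_diff_right)
lemma Amult_zero_left[simp]: "Amult h 0 Q = 0"
  by (simp add: Amult_Mop)
lemma Amult_zero_right[simp]: "Amult h P 0 = 0"
  by (simp add: Amult_Mop)

lemma Amult_Aemb_left: "Amult h (Aemb f) Q = smult f Q"
  by (simp add: Amult_Mop Aemb_def Mop_const)

lemma Amult_cc_right: "Amult h P [:[:c:]:] = smult [:c:] P"
proof -
  have "Amult h P [:[:c:]:] = (\<Sum>i\<le>degree P. monom (coeff P i * [:c:]) i)"
    by (simp add: Amult_Mop Mop_def Lopi_cc smult_monom)
  also have "\<dots> = smult [:c:] (\<Sum>i\<le>degree P. monom (coeff P i) i)"
    by (simp add: smult_sum_right smult_monom mult.commute)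
  finally show ?thesis by (simp add: poly_as_sum_of_monoms)
qed

lemma Amult_cc_left: "Amult h [:[:c:]:] P = smult [:c:] P"
  using Amult_Aemb_left[where h=h and f="[:c:]" and Q=P] by (simp add: Aemb_def)

lemma Amult_monom_right: "Amult h P (monom 1 k) = monom 1 k * P"
proof -
  have L: "(Lop h ^^ i) (monom 1 k) = monom 1 k * monom 1 i" for i
  proof -
    have "(Lop h ^^ i) (1::'a poly poly) = monom 1 i"
      using Lopi_cc[where h=h and i=i and c=1] by (simp add: one_pCons)
    then show ?thesis using Lopi_monom_mult[where h=h and i=i and j=k and Q=1] by simp
  qed
  have "Amult h P (monom 1 k) = (\<Sum>i\<le>degree P. monom 1 k * monom (coeff P i) i)"
    by (simp add: Amult_Mop Mop_def L smult_monom mult_monom)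
  also have "\<dots> = monom 1 k * (\<Sum>i\<le>degree P. monom (coeff P i) i)"
    by (simp add: sum_distrib_left)
  finally show ?thesis by (simp add: poly_as_sum_of_monoms)
qed

lemma Amult_Y_left: "Amult h (monom 1 1) Q = Lop h Q"
  by (simp add: Amult_Mop Mop_monom)

lemma Amult_Aemb_Aemb: "Amult h (Aemb f) (Aemb g) = Aemb (f * g)"
  unfolding Amult_Aemb_left by (simp add: Aemb_def)

lemma A_induct:
  assumes add: "\<And>a b. P a \<Longrightarrow> P b \<Longrightarrow> P (a + b)"
    and mult: "\<And>a b. P a \<Longrightarrow> P b \<Longrightarrow> P (Amult h a b)"
    and const: "\<And>c. P [:[:c:]:]"
    and X: "P [:[:0,1:]:]"
    and Y: "P (monom 1 1)"
  shows "P a"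
proof -
  have E: "P [:g:]" for g
  proof (induction g)
    case 0
    then show ?case using const[of 0] by simp
  next
    case (pCons c g)
    have "Amult h [:[:0,1:]:] [:g:] = [:pCons 0 g:]"
      using Amult_Aemb_left[of h "[:0,1:]" "[:g:]"] by (simp add: Aemb_def)
    moreover have "[:pCons c g:] = [:[:c:]:] + [:pCons 0 g:]" by simp
    ultimately show ?case using add[OF const mult[OF X pCons(2)]] by simp
  qed
  have M: "P (monom 1 i)" for i
  proof (induction i)
    case 0
    then show ?case using const[of 1] by (metis monom_0 one_pCons)
  next
    case (Suc i)
    have "Amult h (monom 1 1) (monom 1 i) = monom 1 (Suc i)"
      by (subst Amult_Y_left) (simp add: Lop_monom Dh_def)
    then show ?case using mult[OF Y Suc] by simp
  qed
  have MM: "P (monom g i)" for g i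
    using mult[OF E[of g] M[of i]] by (simp add: Amult_Mop Mop_const smult_monom)
  have S: "P (\<Sum>i\<in>A. monom (coeff a i) i)" for A :: "nat set"
  proof (induction A rule: infinite_finite_induct)
    case (infinite A)
    then show ?case using const[of 0] by simp
  next
    case empty
    then show ?case using const[of 0] by simp
  next
    case (insert x F)
    then show ?case using add[OF MM] by simp
  qed
  show ?thesis using S[of "{..degree a}"] by (simp add: poly_as_sum_of_monoms)
qed


context
begin

interpretation field_poly:
  normalization_euclidean_semiring_multiplicative where zero = "0 :: 'a :: field poly"
    and one = 1 and plus = plus and minus = minus
    and times = times
    and normalize = "\<lambda>p. smult (inverse (lead_coeff p)) p"
    and unit_factor = "\<lambda>p. [:lead_coeff p:]"
    and euclidean_size = "\<lambda>p. if p = 0 then 0 else 2 ^ degree p"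
    and divide = divide and modulo = modulo
  rewrites "dvd.dvd (times :: 'a poly \<Rightarrow> _) = Rings.dvd"
    and "comm_monoid_mult.prod_mset times 1 = prod_mset"
    and "comm_semiring_1.irreducible times 1 0 = irreducible"
    and "comm_semiring_1.prime_elem times 1 0 = prime_elem"
    and "power.power (1::'a poly) times = power"
    and "comm_monoid_mult.prod times (1::'a poly) = prod"
proof -
  show "power.power (1::'a poly) times = power" by (simp add: power_dict)
  show "comm_monoid_mult.prod times (1::'a poly) = prod" by (simp add: prod_dict)
  show "dvd.dvd (times :: 'a poly \<Rightarrow> _) = Rings.dvd"
    by (simp add: dvd_dict)
  show "comm_monoid_mult.prod_mset times 1 = prod_mset"
    by (simp add: prod_mset_dict)
  show "comm_semiring_1.irreducible times 1 0 = irreducible"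
    by (simp add: irreducible_dict)
  show "comm_semiring_1.prime_elem times 1 0 = prime_elem"
    by (simp add: prime_elem_dict)
  show "class.normalization_euclidean_semiring_multiplicative divide plus minus (0 :: 'a poly) times 1
    modulo (\<lambda>p. if p = 0 then 0 else 2 ^ degree p)
    (\<lambda>p. [:lead_coeff p:]) (\<lambda>p. smult (inverse (lead_coeff p)) p)"
  proof (standard, fold dvd_dict)
    fix p :: "'a poly"
    show "[:lead_coeff p:] * smult (inverse (lead_coeff p)) p = p"
      by (cases "p = 0") simp_all
  next
    fix p :: "'a poly" assume "is_unit p"
    then show "[:lead_coeff p:] = p"
      by (elim is_unit_polyE) (auto simp: monom_0 one_poly_def field_simps)
  next
    fix p :: "'a poly" assume "p \<noteq> 0"
    then show "is_unit [:lead_coeff p:]"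
      by (simp add: is_unit_pCons_iff)
  next
    fix a b :: "'a poly" assume "is_unit a"
    thus "[:lead_coeff (a * b):] = a * [:lead_coeff b:]"
      by (auto elim!: is_unit_polyE)
  qed (auto simp: lead_coeff_mult Rings.div_mult_mod_eq intro!: degree_mod_less' degree_mult_right_le)
qed


lemma smult_as_mult: "smult c x = [:c:] * x" by simp

lemma deriv_decomp:
  "p * pderiv (p ^ e * q) = p ^ e * (smult (of_nat e) (pderiv p * q) + p * pderiv q)"
proof (cases e)
  case 0
  then show ?thesis by simp
next
  case (Suc k)
  define c where "c = (of_nat (Suc k) :: 'a)"
  have d: "pderiv (p ^ Suc k * q) = p ^ Suc k * pderiv q + q * (smult c (p ^ k) * pderiv p)"
    unfolding c_def by (simp only: pderiv_mult pderiv_power_Suc)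
  have "p * pderiv (p ^ Suc k * q) = p ^ Suc k * (smult c (pderiv p * q) + p * pderiv q)"
    by (subst d, simp only: power_Suc smult_as_mult ring_distribs mult_ac add_ac)
  then show ?thesis using Suc c_def by simp
qed

lemma degree_pderiv_le: "degree (pderiv p) \<le> degree p - 1"
  by (rule degree_le) (auto simp: coeff_pderiv coeff_eq_0)

lemma pderiv_degree0: "degree p = 0 \<Longrightarrow> pderiv p = 0"
  by (rule poly_eqI) (auto simp: coeff_pderiv coeff_eq_0)

lemma prime_elem_degree: "prime_elem (p::'a::field poly) \<Longrightarrow> degree p > 0"
  by (metis gr0I is_unit_iff_degree prime_elem_def)

lemma dvd_smult_pderiv_zero:
  fixes p :: "'a::field poly"
  assumes "prime_elem p" "p dvd smult c (pderiv p)"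
  shows "smult c (pderiv p) = 0"
proof (rule ccontr)
  assume nz: "smult c (pderiv p) \<noteq> 0"
  have "degree p \<le> degree (smult c (pderiv p))" by (rule dvd_imp_degree_le[OF assms(2) nz])
  also have "\<dots> \<le> degree (pderiv p)" by (rule degree_smult_le)
  also have "\<dots> \<le> degree p - 1" by (rule degree_pderiv_le)
  finally show False using prime_elem_degree[OF assms(1)] by simp
qed

lemma prime_not_unit: "prime_elem p \<Longrightarrow> \<not> is_unit p"
  by (simp add: prime_elem_def)

lemma K_lemma:
  fixes p g1 g2 :: "'a::field poly"
  assumes p: "prime_elem p" and nz: "g1 \<noteq> 0" "g2 \<noteq> 0"
    and eq: "pderiv g1 * g2 = g1 * pderiv g2"
  shows "smult (of_nat (field_poly.multiplicity p g1)) (pderiv p) =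
         smult (of_nat (field_poly.multiplicity p g2)) (pderiv p)"
proof -
  define e1 where "e1 = field_poly.multiplicity p g1"
  define e2 where "e2 = field_poly.multiplicity p g2"
  obtain q1 where q1: "g1 = p ^ e1 * q1" "\<not> p dvd q1"
    using field_poly.multiplicity_decompose'[OF nz(1) prime_not_unit[OF p]] e1_def by blast
  obtain q2 where q2: "g2 = p ^ e2 * q2" "\<not> p dvd q2"
    using field_poly.multiplicity_decompose'[OF nz(2) prime_not_unit[OF p]] e2_def by blast
  define A1 where "A1 = smult (of_nat e1) (pderiv p * q1) + p * pderiv q1"
  define A2 where "A2 = smult (of_nat e2) (pderiv p * q2) + p * pderiv q2"
  have d1: "p * pderiv g1 = p ^ e1 * A1" unfolding A1_def q1(1) by (rule deriv_decomp)
  have d2: "p * pderiv g2 = p ^ e2 * A2" unfolding A2_def q2(1) by (rule deriv_decomp)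
  have "p ^ (e1 + e2) * (A1 * q2) = p ^ (e1 + e2) * (q1 * A2)"
  proof -
    have "p ^ (e1 + e2) * (A1 * q2) = (p * pderiv g1) * g2"
      by (simp add: d1 q2(1) power_add algebra_simps)
    also have "\<dots> = g1 * (p * pderiv g2)" using eq by (simp add: algebra_simps)
    also have "\<dots> = p ^ (e1 + e2) * (q1 * A2)"
      by (simp add: d2 q1(1) power_add algebra_simps)
    finally show ?thesis .
  qed
  moreover have "p \<noteq> 0" using p by auto
  ultimately have E: "A1 * q2 = q1 * A2" by simp
  have "smult (of_nat e1 - of_nat e2) (pderiv p) * (q1 * q2) =
        p * (q1 * pderiv q2 - pderiv q1 * q2)"
  proof -
    have m: "[:of_nat e1 - of_nat e2:] = [:of_nat e1:] - [:(of_nat e2::'a):]" by simp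
    show ?thesis using E unfolding A1_def A2_def smult_as_mult m by algebra
  qed
  then have "p dvd smult (of_nat e1 - of_nat e2) (pderiv p) * (q1 * q2)" by simp
  then have "p dvd smult (of_nat e1 - of_nat e2) (pderiv p) \<or> p dvd (q1 * q2)"
    by (rule prime_elem_dvd_multD[OF p])
  moreover have "\<not> p dvd q1 * q2" using q1(2) q2(2) p by (simp add: prime_elem_dvd_mult_iff)
  ultimately have "p dvd smult (of_nat e1 - of_nat e2) (pderiv p)" by blast
  then have "smult (of_nat e1 - of_nat e2) (pderiv p) = 0"
    by (rule dvd_smult_pderiv_zero[OF p])
  then show ?thesis unfolding e1_def[symmetric] e2_def[symmetric]
    by (simp add: smult_diff_left)
qed

lemma K2_lemma:
  fixes p g h t :: "'a::field poly"
  assumes p: "prime_elem p" and nd: "\<not> p dvd h" and nz: "g \<noteq> 0"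
    and eq: "h * pderiv g = - (t * g)"
  shows "smult (of_nat (field_poly.multiplicity p g)) (pderiv p) = 0"
proof -
  define e where "e = field_poly.multiplicity p g"
  obtain q where q: "g = p ^ e * q" "\<not> p dvd q"
    using field_poly.multiplicity_decompose'[OF nz prime_not_unit[OF p]] e_def by blast
  define A where "A = smult (of_nat e) (pderiv p * q) + p * pderiv q"
  have d: "p * pderiv g = p ^ e * A" unfolding A_def q(1) by (rule deriv_decomp)
  have "p ^ e * (h * A) = p ^ e * (- (t * p * q))"
  proof -
    have "p ^ e * (h * A) = h * (p * pderiv g)" by (simp add: d algebra_simps)
    also have "\<dots> = p * (h * pderiv g)" by (simp add: algebra_simps)
    also have "\<dots> = p * (- (t * g))" by (simp only: eq)
    also have "\<dots> = p ^ e * (- (t * p * q))" by (simp add: q(1) algebra_simps)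
    finally show ?thesis .
  qed
  moreover have "p \<noteq> 0" using p by auto
  ultimately have E: "h * A = - (t * p * q)" by (metis mult_cancel_left power_eq_0_iff)
  have "h * (smult (of_nat e) (pderiv p) * q) = p * (- (t * q) - h * pderiv q)"
    using E unfolding A_def smult_as_mult by algebra
  then have "p dvd h * (smult (of_nat e) (pderiv p) * q)" by (metis dvd_triv_left)
  then have "p dvd h \<or> p dvd smult (of_nat e) (pderiv p) * q"
    by (rule prime_elem_dvd_multD[OF p])
  then have "p dvd smult (of_nat e) (pderiv p) \<or> p dvd q"
    using nd prime_elem_dvd_multD[OF p] by blast
  then have "p dvd smult (of_nat e) (pderiv p)" using q(2) by blast
  then show ?thesis unfolding e_def[symmetric] by (rule dvd_smult_pderiv_zero[OF p])
qed

lemma Z_lemma: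
  fixes c :: "'a::field poly"
  assumes nz: "c \<noteq> 0"
    and H: "\<And>p. prime_elem p \<Longrightarrow> smult (of_nat (field_poly.multiplicity p c)) (pderiv p) = 0"
  shows "pderiv c = 0"
proof (rule ccontr)
  assume nz': "pderiv c \<noteq> 0"
  have "c dvd pderiv c"
  proof (rule field_poly.multiplicity_le_imp_dvd[OF nz])
    fix p :: "'a poly" assume "field_poly.prime p"
    then have p: "prime_elem p" by (simp add: field_poly.prime_def)
    define e where "e = field_poly.multiplicity p c"
    obtain q where q: "c = p ^ e * q" "\<not> p dvd q"
      using field_poly.multiplicity_decompose'[OF nz prime_not_unit[OF p]] e_def by blast
    have "p * pderiv c = p ^ e * (smult (of_nat e) (pderiv p * q) + p * pderiv q)"
      unfolding q(1) by (rule deriv_decomp)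
    also have "smult (of_nat e) (pderiv p * q) = smult (of_nat e) (pderiv p) * q"
      by simp
    also have "smult (of_nat e) (pderiv p) = 0" using H[OF p] e_def by simp
    finally have "p * pderiv c = p * (p ^ e * pderiv q)" by (simp add: algebra_simps)
    moreover have "p \<noteq> 0" using p by auto
    ultimately have "pderiv c = p ^ e * pderiv q" by simp
    then have "p ^ e dvd pderiv c" by simp
    then show "field_poly.multiplicity p c \<le> field_poly.multiplicity p (pderiv c)"
      using field_poly.power_dvd_iff_le_multiplicity[OF nz' prime_not_unit[OF p]] e_def by simp
  qed
  then have "degree c \<le> degree (pderiv c)" using nz' by (rule dvd_imp_degree_le)
  then have "degree c = 0" using degree_pderiv_le[of c] by simp
  then have "pderiv c = 0" by (rule pderiv_degree0)
  with nz' show False by simp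
qed

end

context
begin

interpretation field_poly:
  normalization_euclidean_semiring_multiplicative where zero = "0 :: 'a :: field poly"
    and one = 1 and plus = plus and minus = minus
    and times = times
    and normalize = "\<lambda>p. smult (inverse (lead_coeff p)) p"
    and unit_factor = "\<lambda>p. [:lead_coeff p:]"
    and euclidean_size = "\<lambda>p. if p = 0 then 0 else 2 ^ degree p"
    and divide = divide and modulo = modulo
  rewrites "dvd.dvd (times :: 'a poly \<Rightarrow> _) = Rings.dvd"
    and "comm_monoid_mult.prod_mset times 1 = prod_mset"
    and "comm_semiring_1.irreducible times 1 0 = irreducible"
    and "comm_semiring_1.prime_elem times 1 0 = prime_elem"
    and "power.power (1::'a poly) times = power"
    and "comm_monoid_mult.prod times (1::'a poly) = prod"
proof -
  show "power.power (1::'a poly) times = power" by (simp add: power_dict)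
  show "comm_monoid_mult.prod times (1::'a poly) = prod" by (simp add: prod_dict)
  show "dvd.dvd (times :: 'a poly \<Rightarrow> _) = Rings.dvd"
    by (simp add: dvd_dict)
  show "comm_monoid_mult.prod_mset times 1 = prod_mset"
    by (simp add: prod_mset_dict)
  show "comm_semiring_1.irreducible times 1 0 = irreducible"
    by (simp add: irreducible_dict)
  show "comm_semiring_1.prime_elem times 1 0 = prime_elem"
    by (simp add: prime_elem_dict)
  show "class.normalization_euclidean_semiring_multiplicative divide plus minus (0 :: 'a poly) times 1
    modulo (\<lambda>p. if p = 0 then 0 else 2 ^ degree p)
    (\<lambda>p. [:lead_coeff p:]) (\<lambda>p. smult (inverse (lead_coeff p)) p)"
  proof (standard, fold dvd_dict)
    fix p :: "'a poly"
    show "[:lead_coeff p:] * smult (inverse (lead_coeff p)) p = p"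
      by (cases "p = 0") simp_all
  next
    fix p :: "'a poly" assume "is_unit p"
    then show "[:lead_coeff p:] = p"
      by (elim is_unit_polyE) (auto simp: monom_0 one_poly_def field_simps)
  next
    fix p :: "'a poly" assume "p \<noteq> 0"
    then show "is_unit [:lead_coeff p:]"
      by (simp add: is_unit_triv)
  next
    fix a b :: "'a poly" assume "is_unit a"
    thus "[:lead_coeff (a * b):] = a * [:lead_coeff b:]"
      by (auto elim!: is_unit_polyE)
  qed (auto simp: lead_coeff_mult Rings.div_mult_mod_eq intro!: degree_mod_less' degree_mult_right_le)
qed


lemma of_nat_mod_CHAR: "of_nat (x mod CHAR('a)) = (of_nat x :: 'a::field)"
proof -
  have "(of_nat x :: 'a) = of_nat (x mod CHAR('a)) + of_nat CHAR('a) * of_nat (x div CHAR('a))"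
    by (metis mod_mult_div_eq of_nat_add of_nat_mult)
  then show ?thesis by simp
qed

lemma of_nat_eq_mod_CHAR:
  assumes "of_nat a = (of_nat b :: 'a::field)"
  shows "a mod CHAR('a) = b mod CHAR('a)"
proof (cases "a \<le> b")
  case True
  then show ?thesis
  proof (cases "a = b")
    case False
    with True have "a < b" by simp
    then have "CHAR('a) dvd (b - a)" using of_nat_eq_iff_char_dvd[of a b, where 'a='a] assms by simp
    then show ?thesis using True mod_eq_dvd_iff_nat by metis
  qed simp
next
  case False
  then have "b < a" by simp
  then have "CHAR('a) dvd (a - b)" using of_nat_eq_iff_char_dvd[of b a, where 'a='a] assms by simp
  then show ?thesis using \<open>b < a\<close> mod_eq_dvd_iff_nat by (metis less_imp_le)
qed

definition nm :: "'a::field poly \<Rightarrow> 'a poly" where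
  "nm p = smult (inverse (lead_coeff p)) p"

lemma nm_alt: "nm p = [:inverse (lead_coeff p):] * p"
  by (simp add: nm_def)

lemma nm_unit: "(p::'a::field poly) \<noteq> 0 \<Longrightarrow> is_unit [:inverse (lead_coeff p):]"
  by (simp add: is_unit_triv)

lemma nm_props:
  fixes p :: "'a::field poly"
  assumes p: "prime_elem p"
  shows "irreducible (nm p)" "lead_coeff (nm p) = 1" "nm p dvd p" "p dvd nm p"
    "\<And>x. field_poly.multiplicity (nm p) x = field_poly.multiplicity p x"
    "pderiv (nm p) = 0 \<longleftrightarrow> pderiv p = 0"
proof -
  have nz: "p \<noteq> 0" using p by auto
  show "irreducible (nm p)" unfolding nm_alt
    using irreducible_mult_unit_left[OF nm_unit[OF nz]] p
    by (simp add: field_poly.prime_elem_iff_irreducible)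
  show "lead_coeff (nm p) = 1" using nz by (simp add: nm_def)
  show "p dvd nm p" unfolding nm_alt by simp
  show "nm p dvd p"
  proof -
    have "p = [:lead_coeff p:] * nm p" using nz by (simp add: nm_def)
    then show ?thesis by (metis dvd_triv_right)
  qed
  show "\<And>x. field_poly.multiplicity (nm p) x = field_poly.multiplicity p x"
    unfolding nm_alt by (rule field_poly.multiplicity_times_unit_left[OF nm_unit[OF nz]])
  show "pderiv (nm p) = 0 \<longleftrightarrow> pderiv p = 0" using nz by (simp add: nm_def pderiv_smult)
qed

lemma monic_dvd_eq:
  fixes p u :: "'a::field poly"
  assumes p: "prime_elem p" and u: "irreducible u" "lead_coeff u = 1" and d: "p dvd u"
  shows "u = nm p"
proof -
  obtain c where c: "u = p * c" using d by blast
  have "is_unit p \<or> is_unit c" using u(1) c by (simp add: irreducible_def)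
  then have uc: "is_unit c" using p by (auto simp: prime_elem_def)
  obtain c0 where c0': "c = [:c0:]" "c0 dvd 1" using is_unit_polyE[OF uc] by blast
  then have c0: "c = [:c0:]" "c0 \<noteq> 0" by auto
  have "lead_coeff u = lead_coeff p * c0" using c c0 by (simp add: lead_coeff_mult)
  moreover have "lead_coeff p \<noteq> 0" using p by auto
  ultimately have "c0 = inverse (lead_coeff p)" using u(2) by (simp add: field_simps)
  then show ?thesis using c c0 by (simp add: nm_def mult.commute)
qed

lemma mult_prod_N:
  fixes p :: "'a::field poly" and N :: "'a poly set"
  assumes p: "prime_elem p" and finN: "finite N"
    and N1: "\<And>u. u \<in> N \<Longrightarrow> irreducible u \<and> lead_coeff u = 1"
  shows "field_poly.multiplicity p (\<Prod>u\<in>N. u ^ b u) = (if nm p \<in> N then b (nm p) else 0)"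
proof -
  have nz: "u \<noteq> 0" if "u \<in> N" for u using N1[OF that] by auto
  have "field_poly.multiplicity p (\<Prod>u\<in>N. u ^ b u) =
        (\<Sum>u\<in>N. field_poly.multiplicity p (u ^ b u))"
    by (rule field_poly.prime_elem_multiplicity_prod_distrib[OF p]) (use nz finN in auto)
  also have "\<dots> = (\<Sum>u\<in>N. if u = nm p then b u else 0)"
  proof (rule sum.cong[OF refl])
    fix u assume uN: "u \<in> N"
    have m: "field_poly.multiplicity p (u ^ b u) = b u * field_poly.multiplicity p u"
      by (rule field_poly.prime_elem_multiplicity_power_distrib[OF p nz[OF uN]])
    show "field_poly.multiplicity p (u ^ b u) = (if u = nm p then b u else 0)"
    proof (cases "p dvd u")
      case True
      then have "u = nm p" using monic_dvd_eq[OF p] N1[OF uN] by blast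
      then have "field_poly.multiplicity p u = 1"
        using nm_props(5)[OF p, of u] field_poly.multiplicity_prime[of "nm p"] nm_props(1)[OF p]
        by (simp add: field_poly.prime_elem_iff_irreducible)
      then show ?thesis using m \<open>u = nm p\<close> by simp
    next
      case False
      then have "u \<noteq> nm p" using nm_props(4)[OF p] by auto
      moreover have "field_poly.multiplicity p u = 0"
        using False field_poly.prime_elem_multiplicity_eq_zero_iff[OF p nz[OF uN]] by simp
      ultimately show ?thesis using m by simp
    qed
  qed
  also have "\<dots> = (if nm p \<in> N then b (nm p) else 0)"
    using finN by (simp add: sum.delta')
  finally show ?thesis .
qed


lemma poly_main:
  fixes h t :: "'a::field poly" and g :: "nat \<Rightarrow> 'a poly" and N :: "'a poly set"
  assumes h: "h \<noteq> 0"
    and eqs: "\<And>j. h * pderiv (g j) = - (t * g j)"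
    and gn: "g n \<noteq> 0"
    and finN: "finite N"
    and N1: "\<And>u. u \<in> N \<Longrightarrow> irreducible u \<and> lead_coeff u = 1 \<and> pderiv u \<noteq> 0"
    and N2: "\<And>p. irreducible p \<Longrightarrow> lead_coeff p = 1 \<Longrightarrow> p dvd h \<Longrightarrow> pderiv p \<noteq> 0 \<Longrightarrow> p \<in> N"
    and b_def: "\<And>u. b u = field_poly.multiplicity u (g n) mod CHAR('a)"
  shows "(\<Prod>u\<in>N. u ^ b u) dvd g j \<and> pderiv (g j div (\<Prod>u\<in>N. u ^ b u)) = 0"
proof (cases "g j = 0")
  case True
  then show ?thesis by simp
next
  case gj: False
  define f where "f = (\<Prod>u\<in>N. u ^ b u)"
  have N1': "\<And>u. u \<in> N \<Longrightarrow> irreducible u \<and> lead_coeff u = 1" using N1 by blast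
  have nz0: "0 \<notin> N"
  proof
    assume "0 \<in> N"
    then have "irreducible (0::'a poly)" using N1 by blast
    then show False by simp
  qed
  have fnz: "f \<noteq> 0" unfolding f_def using finN nz0 by (auto simp: prod_zero_iff)
  have mf: "field_poly.multiplicity p f = (if nm p \<in> N then b (nm p) else 0)"
    if "prime_elem p" for p
    unfolding f_def by (rule mult_prod_N[OF that finN N1'])
  have deq: "pderiv (g j) * g n = g j * pderiv (g n)"
  proof -
    have "h * (pderiv (g j) * g n) = h * (g j * pderiv (g n))"
    proof -
      have "h * (pderiv (g j) * g n) = (h * pderiv (g j)) * g n" by (simp add: mult.assoc)
      also have "\<dots> = - (t * g j) * g n" by (simp only: eqs)
      also have "\<dots> = g j * - (t * g n)" by (simp add: algebra_simps)
      also have "\<dots> = g j * (h * pderiv (g n))" by (simp only: eqs)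
      finally show ?thesis by (simp add: algebra_simps)
    qed
    then show ?thesis using h by simp
  qed
  have ofnat: "of_nat (field_poly.multiplicity u (g j)) = (of_nat (field_poly.multiplicity u (g n)) :: 'a)"
    if uN: "u \<in> N" for u
  proof -
    have pu: "prime_elem u" using N1[OF uN] by (simp add: field_poly.prime_elem_iff_irreducible)
    have "smult (of_nat (field_poly.multiplicity u (g j))) (pderiv u) =
          smult (of_nat (field_poly.multiplicity u (g n))) (pderiv u)"
      by (rule K_lemma[OF pu gj gn deq])
    then have "smult (of_nat (field_poly.multiplicity u (g j)) - of_nat (field_poly.multiplicity u (g n))) (pderiv u) = 0"
      by (simp add: smult_diff_left)
    then show ?thesis using N1[OF uN] by simp
  qed
  have ble: "b u \<le> field_poly.multiplicity u (g j)" if uN: "u \<in> N" for u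
  proof -
    have "field_poly.multiplicity u (g j) mod CHAR('a) = field_poly.multiplicity u (g n) mod CHAR('a)"
      by (rule of_nat_eq_mod_CHAR[OF ofnat[OF uN]])
    then have "b u = field_poly.multiplicity u (g j) mod CHAR('a)" by (simp add: b_def)
    then show ?thesis by simp
  qed
  have dvd: "f dvd g j"
  proof (rule field_poly.multiplicity_le_imp_dvd[OF fnz])
    fix p :: "'a poly" assume "field_poly.prime p"
    then have p: "prime_elem p" by (simp add: field_poly.prime_def)
    show "field_poly.multiplicity p f \<le> field_poly.multiplicity p (g j)"
    proof (cases "nm p \<in> N")
      case True
      then show ?thesis using mf[OF p] ble[OF True] nm_props(5)[OF p] by simp
    next
      case False
      then show ?thesis using mf[OF p] by simp
    qed
  qed
  define c where "c = g j div f"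
  have gjc: "g j = f * c" unfolding c_def using dvd by simp
  have cnz: "c \<noteq> 0" using gj gjc by auto
  have "pderiv c = 0"
  proof (rule Z_lemma[OF cnz])
    fix p :: "'a poly" assume p: "prime_elem p"
    have mc: "field_poly.multiplicity p (g j) = field_poly.multiplicity p f + field_poly.multiplicity p c"
      unfolding gjc by (rule field_poly.prime_elem_multiplicity_mult_distrib[OF p fnz cnz])
    show "smult (of_nat (field_poly.multiplicity p c)) (pderiv p) = 0"
    proof (cases "nm p \<in> N")
      case True
      define u where "u = nm p"
      have uN: "u \<in> N" using True u_def by simp
      have m1: "field_poly.multiplicity p (g j) = field_poly.multiplicity u (g j)"
        using nm_props(5)[OF p] u_def by simp
      have "(of_nat (field_poly.multiplicity p (g j)) :: 'a) = of_nat (b u)"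
        using ofnat[OF uN] m1 by (simp add: b_def of_nat_mod_CHAR)
      moreover have "field_poly.multiplicity p c = field_poly.multiplicity p (g j) - b u"
        using mc mf[OF p] True u_def by simp
      moreover have "b u \<le> field_poly.multiplicity p (g j)" using ble[OF uN] m1 by simp
      ultimately have "(of_nat (field_poly.multiplicity p c) :: 'a) = 0"
        by (simp add: of_nat_diff)
      then show ?thesis by simp
    next
      case False
      have mc': "field_poly.multiplicity p c = field_poly.multiplicity p (g j)"
        using mc mf[OF p] False by simp
      show ?thesis
      proof (cases "pderiv p = 0")
        case True
        then show ?thesis by simp
      next
        case dp: False
        have "\<not> p dvd h"
        proof
          assume "p dvd h"
          then have "nm p dvd h" using nm_props(3)[OF p] dvd_trans by blast
          then have "nm p \<in> N"
            using N2[OF nm_props(1)[OF p] nm_props(2)[OF p]] nm_props(6)[OF p] dp by blast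
          with False show False by simp
        qed
        then show ?thesis unfolding mc' by (rule K2_lemma[OF p _ gj eqs])
      qed
    qed
  qed
  then show ?thesis using dvd unfolding c_def f_def by simp
qed

end

lemma monom11_mult: "monom 1 (Suc 0) * (p::'b::comm_ring_1 poly) = pCons 0 p"
  by (rule poly_eqI) (auto simp: coeff_monom_mult coeff_pCons split: nat.split)

lemma Lop_Aemb: "Lop h [:f:] = pCons 0 [:f:] + [:Dh h f:]"
  by (rule poly_eqI) (auto simp: coeff_Lop coeff_pCons split: nat.split)

lemma Amult_diff_left: "Amult h (P - P') Q = Amult h P Q - Amult h P' Q"
  using Amult_add_left[of h "P - P'" P' Q] by (simp add: algebra_simps)

lemma Amult_Y_right: "Amult h P (monom 1 (Suc 0)) = pCons 0 P"
  using Amult_monom_right[of h P 1] by (simp add: monom11_mult)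

lemma Amult_Y_left': "Amult h (monom 1 (Suc 0)) Q = Lop h Q"
  using Amult_Y_left[of h Q] by simp

lemma central_of_gens:
  assumes X: "Amult h z [:[:0,1:]:] = Amult h [:[:0,1:]:] z"
    and Y: "Amult h z (monom 1 1) = Amult h (monom 1 1) z"
  shows "z \<in> Acenter h"
proof -
  have "Amult h z a = Amult h a z" for a
  proof (induction a rule: A_induct[where h=h])
    case (1 a b)
    then show ?case by (simp add: Amult_add_left Amult_add_right)
  next
    case (2 a b)
    have "Amult h z (Amult h a b) = Amult h (Amult h a z) b" using 2 by (simp add: Amult_assoc[symmetric])
    also have "\<dots> = Amult h a (Amult h b z)" using 2 by (simp add: Amult_assoc)
    finally show ?case by (simp add: Amult_assoc)
  next
    case (3 c)
    then show ?case by (simp add: Amult_cc_right Amult_cc_left)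
  qed (use X Y in auto)
  then show ?thesis by (simp add: Acenter_def)
qed

lemma Aemb_central_imp:
  assumes h: "h \<noteq> 0" and c: "Aemb u \<in> Acenter h"
  shows "pderiv u = 0"
proof -
  have "Amult h (Aemb u) (monom 1 1) = Amult h (monom 1 1) (Aemb u)"
    using c by (simp add: Acenter_def)
  then have "pCons 0 [:u:] = pCons 0 [:u:] + [:Dh h u:]"
    by (simp add: Amult_Y_right Amult_Y_left' Lop_Aemb Aemb_def del: pCons_0_0)
  then have "Dh h u = 0" by simp
  then show ?thesis using h by (simp add: Dh_def)
qed

lemma Aemb_central_if:
  assumes "pderiv u = 0"
  shows "Aemb u \<in> Acenter h"
proof (rule central_of_gens)
  show "Amult h (Aemb u) [:[:0, 1:]:] = Amult h [:[:0, 1:]:] (Aemb u)"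
    using Amult_Aemb_Aemb[of h u "[:0,1:]"] Amult_Aemb_Aemb[of h "[:0,1:]" u]
    by (simp add: Aemb_def mult.commute)
  show "Amult h (Aemb u) (monom 1 1) = Amult h (monom 1 1) (Aemb u)"
    using assms by (simp add: Amult_Y_right Amult_Y_left' Lop_Aemb Aemb_def Dh_def del: pCons_0_0)
qed

lemma normal_Aemb:
  assumes D: "Dh h f = f * w"
  shows "\<exists>a'. Amult h (Aemb f) a = Amult h a' (Aemb f)"
    and "\<exists>a'. Amult h a (Aemb f) = Amult h (Aemb f) a'"
proof -
  have AA: "Amult h (Aemb p) (Aemb q) = Amult h (Aemb q) (Aemb p)" for p q
    by (simp add: Amult_Aemb_Aemb mult.commute)
  show "\<exists>a'. Amult h (Aemb f) a = Amult h a' (Aemb f)"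
  proof (induction a rule: A_induct[where h=h])
    case (1 a b)
    then obtain a' b' where "Amult h (Aemb f) a = Amult h a' (Aemb f)"
      "Amult h (Aemb f) b = Amult h b' (Aemb f)" by blast
    then show ?case by (intro exI[of _ "a' + b'"]) (simp add: Amult_add_left Amult_add_right)
  next
    case (2 a b)
    then obtain a' b' where ab: "Amult h (Aemb f) a = Amult h a' (Aemb f)"
      "Amult h (Aemb f) b = Amult h b' (Aemb f)" by blast
    have "Amult h (Aemb f) (Amult h a b) = Amult h (Amult h a' b') (Aemb f)"
      by (simp add: Amult_assoc[symmetric] ab(1)) (simp add: Amult_assoc ab(2))
    then show ?case by blast
  next
    case (3 c)
    show ?case using AA[of f "[:c:]"] by (auto simp: Aemb_def)
  next
    case 4
    show ?case using AA[of f "[:0,1:]"] by (auto simp: Aemb_def)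
  next
    case 5
    have "Amult h (Aemb f) (monom 1 1) = Amult h (monom 1 1 - Aemb w) (Aemb f)"
      using D by (simp add: Amult_Y_right Amult_diff_left Amult_Y_left' Lop_Aemb Amult_Aemb_left[unfolded Aemb_def]
          Aemb_def mult.commute del: pCons_0_0)
    then show ?case by blast
  qed
  show "\<exists>a'. Amult h a (Aemb f) = Amult h (Aemb f) a'"
  proof (induction a rule: A_induct[where h=h])
    case (1 a b)
    then obtain a' b' where "Amult h a (Aemb f) = Amult h (Aemb f) a'"
      "Amult h b (Aemb f) = Amult h (Aemb f) b'" by blast
    then show ?case by (intro exI[of _ "a' + b'"]) (simp add: Amult_add_left Amult_add_right)
  next
    case (2 a b)
    then obtain a' b' where ab: "Amult h a (Aemb f) = Amult h (Aemb f) a'"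
      "Amult h b (Aemb f) = Amult h (Aemb f) b'" by blast
    have "Amult h (Amult h a b) (Aemb f) = Amult h (Aemb f) (Amult h a' b')"
      by (simp add: Amult_assoc ab(2)) (simp add: Amult_assoc[symmetric] ab(1))
    then show ?case by blast
  next
    case (3 c)
    show ?case using AA[of "[:c:]" f] by (auto simp: Aemb_def)
  next
    case 4
    show ?case using AA[of "[:0,1:]" f] by (auto simp: Aemb_def)
  next
    case 5
    have "Amult h (monom 1 1) (Aemb f) = Amult h (Aemb f) (monom 1 1 + Aemb w)"
      using D by (simp add: Amult_Y_right Amult_add_right Amult_Y_left' Lop_Aemb Amult_Aemb_left[unfolded Aemb_def]
          Aemb_def del: pCons_0_0)
    then show ?case by blast
  qed
qed

lemma normal_of:
  assumes D: "Dh h f = f * w" and z: "z \<in> Acenter h"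
  shows "Anormal h (Amult h (Aemb f) z)"
proof -
  have zc: "Amult h z a = Amult h a z" for a using z by (simp add: Acenter_def)
  let ?v = "Amult h (Aemb f) z"
  have "{Amult h ?v a | a. True} = {Amult h a ?v | a. True}"
  proof (intro set_eqI iffI)
    fix x assume "x \<in> {Amult h ?v a | a. True}"
    then obtain a where x: "x = Amult h ?v a" by blast
    obtain a' where a': "Amult h (Aemb f) a = Amult h a' (Aemb f)" using normal_Aemb(1)[OF D] by blast
    have "x = Amult h a' ?v"
      unfolding x by (simp add: Amult_assoc zc[of a]) (simp add: Amult_assoc[symmetric] a')
    then show "x \<in> {Amult h a ?v | a. True}" by blast
  next
    fix x assume "x \<in> {Amult h a ?v | a. True}"
    then obtain a where x: "x = Amult h a ?v" by blast
    obtain a' where a': "Amult h a (Aemb f) = Amult h (Aemb f) a'" using normal_Aemb(2)[OF D] by blast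
    have "x = Amult h ?v a'"
      unfolding x by (simp add: Amult_assoc[symmetric] a') (simp add: Amult_assoc zc)
    then show "x \<in> {Amult h ?v a | a. True}" by blast
  qed
  then show ?thesis by (simp add: Anormal_def)
qed

lemma logD_prod:
  assumes fin: "finite N" and dv: "\<And>u. u \<in> N \<Longrightarrow> u dvd h"
  shows "\<exists>w. Dh h (\<Prod>u\<in>N. u ^ b u) = (\<Prod>u\<in>N. u ^ b u) * w"
proof -
  have mult: "\<exists>w. Dh h (p * q) = (p * q) * w" if e1: "\<exists>w. Dh h p = p * w" and e2: "\<exists>w. Dh h q = q * w" for p q
  proof -
    obtain w1 w2 where "Dh h p = p * w1" "Dh h q = q * w2" using e1 e2 by blast
    then have "Dh h (p * q) = (p * q) * (w1 + w2)" by (simp add: Dh_mult algebra_simps)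
    then show ?thesis by blast
  qed
  have one: "\<exists>w. Dh h 1 = 1 * w" by (intro exI[of _ 0]) (simp add: Dh_def)
  have pw: "\<exists>w. Dh h (u ^ n) = u ^ n * w" if dvdh: "u dvd h" for u n
  proof (induction n)
    case 0
    then show ?case using one by simp
  next
    case (Suc n)
    obtain k where "h = u * k" using dvdh by blast
    then have "Dh h u = u * (k * pderiv u)" by (simp add: Dh_def algebra_simps)
    then have "\<exists>w. Dh h u = u * w" by blast
    from mult[OF this Suc] show ?case by simp
  qed
  show ?thesis using fin dv
  proof (induction N rule: finite_induct)
    case empty
    then show ?case using one by simp
  next
    case (insert x F)
    then show ?case using mult[OF pw[of x "b x"]] by simp
  qed
qed


context
begin

interpretation field_poly:
  normalization_euclidean_semiring_multiplicative where zero = "0 :: 'a :: field poly"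
    and one = 1 and plus = plus and minus = minus
    and times = times
    and normalize = "\<lambda>p. smult (inverse (lead_coeff p)) p"
    and unit_factor = "\<lambda>p. [:lead_coeff p:]"
    and euclidean_size = "\<lambda>p. if p = 0 then 0 else 2 ^ degree p"
    and divide = divide and modulo = modulo
  rewrites "dvd.dvd (times :: 'a poly \<Rightarrow> _) = Rings.dvd"
    and "comm_monoid_mult.prod_mset times 1 = prod_mset"
    and "comm_semiring_1.irreducible times 1 0 = irreducible"
    and "comm_semiring_1.prime_elem times 1 0 = prime_elem"
    and "power.power (1::'a poly) times = power"
    and "comm_monoid_mult.prod times (1::'a poly) = prod"
proof -
  show "power.power (1::'a poly) times = power" by (simp add: power_dict)
  show "comm_monoid_mult.prod times (1::'a poly) = prod" by (simp add: prod_dict)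
  show "dvd.dvd (times :: 'a poly \<Rightarrow> _) = Rings.dvd"
    by (simp add: dvd_dict)
  show "comm_monoid_mult.prod_mset times 1 = prod_mset"
    by (simp add: prod_mset_dict)
  show "comm_semiring_1.irreducible times 1 0 = irreducible"
    by (simp add: irreducible_dict)
  show "comm_semiring_1.prime_elem times 1 0 = prime_elem"
    by (simp add: prime_elem_dict)
  show "class.normalization_euclidean_semiring_multiplicative divide plus minus (0 :: 'a poly) times 1
    modulo (\<lambda>p. if p = 0 then 0 else 2 ^ degree p)
    (\<lambda>p. [:lead_coeff p:]) (\<lambda>p. smult (inverse (lead_coeff p)) p)"
  proof (standard, fold dvd_dict)
    fix p :: "'a poly"
    show "[:lead_coeff p:] * smult (inverse (lead_coeff p)) p = p"
      by (cases "p = 0") simp_all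
  next
    fix p :: "'a poly" assume "is_unit p"
    then show "[:lead_coeff p:] = p"
      by (elim is_unit_polyE) (auto simp: monom_0 one_poly_def field_simps)
  next
    fix p :: "'a poly" assume "p \<noteq> 0"
    then show "is_unit [:lead_coeff p:]"
      by (simp add: is_unit_pCons_iff)
  next
    fix a b :: "'a poly" assume "is_unit a"
    thus "[:lead_coeff (a * b):] = a * [:lead_coeff b:]"
      by (auto elim!: is_unit_polyE)
  qed (auto simp: lead_coeff_mult Rings.div_mult_mod_eq intro!: degree_mod_less' degree_mult_right_le)
qed


lemma finite_ncf:
  fixes h :: "'a::field poly"
  assumes h: "h \<noteq> 0"
  shows "finite (noncentral_factors h)"
proof (rule finite_subset)
  show "noncentral_factors h \<subseteq> set_mset (field_poly.prime_factorization h)"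
  proof
    fix u assume u: "u \<in> noncentral_factors h"
    then have "irreducible u" "lead_coeff u = 1" "u dvd h" by (auto simp: noncentral_factors_def)
    then have "field_poly.prime u"
      by (simp add: field_poly.prime_def field_poly.prime_elem_iff_irreducible)
    then show "u \<in> set_mset (field_poly.prime_factorization h)"
      using h \<open>u dvd h\<close> by (simp add: field_poly.in_prime_factors_iff)
  qed
qed simp

lemma degree0_const: "degree a = 0 \<Longrightarrow> a = [:lead_coeff a:]"
  by (rule poly_eqI) (auto simp: coeff_eq_0 coeff_pCons split: nat.split)

lemma forward:
  fixes h :: "'a::field poly" and v :: "'a poly poly"
  assumes h: "h \<noteq> 0" and nv: "Anormal h v"
  shows "\<exists>\<beta> z. z \<in> Acenter h \<and> (\<forall>u\<in>noncentral_factors h. 0 < CHAR('a) \<longrightarrow> \<beta> u < CHAR('a)) \<and>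
           v = Amult h (Aemb (\<Prod>u\<in>noncentral_factors h. u ^ \<beta> u)) z"
proof (cases "v = 0")
  case True
  have "0 \<in> Acenter h" by (simp add: Acenter_def)
  then show ?thesis using True by (intro exI[of _ "\<lambda>_. 0"] exI[of _ 0]) auto
next
  case vnz: False
  define X :: "'a poly poly" where "X = [:[:0,1:]:]"
  define Y :: "'a poly poly" where "Y = monom 1 (Suc 0)"
  have eqset: "{Amult h v a | a. True} = {Amult h a v | a. True}" using nv by (simp add: Anormal_def)
  have ex: "\<exists>a. Amult h v c = Amult h a v" for c
  proof -
    have "Amult h v c \<in> {Amult h v a | a. True}" by blast
    then show ?thesis unfolding eqset by blast
  qed
  have lvnz: "lead_coeff v \<noteq> 0" using vnz by simp
  obtain a where a: "Amult h v X = Amult h a v" using ex by blast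
  have Xnz: "X \<noteq> 0" by (simp add: X_def)
  have anz: "a \<noteq> 0" using a Amult_nonzero[OF vnz Xnz, of h] by auto
  have da: "degree a = 0" and la: "lead_coeff a * lead_coeff v = [:0,1:] * lead_coeff v"
    using Amult_degree[OF vnz Xnz, of h] Amult_degree[OF anz vnz, of h] a lvnz
    by (auto simp: X_def mult.commute)
  have "lead_coeff a = [:0,1:]" using la lvnz mult_cancel_right by blast
  then have "degree a = 0 \<and> lead_coeff a = [:0,1:]" using da by simp
  then have "a = X" unfolding X_def using degree0_const[of a] by auto
  then have vX: "Amult h v X = Amult h X v" using a by simp
  obtain b where b: "Amult h v Y = Amult h b v" using ex by blast
  have Ynz: "Y \<noteq> 0" by (simp add: Y_def)
  have bnz: "b \<noteq> 0" using b Amult_nonzero[OF vnz Ynz, of h] by auto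
  have db: "degree b = 1 \<and> lead_coeff b = 1"
    using Amult_degree[OF vnz Ynz, of h] Amult_degree[OF bnz vnz, of h] b lvnz
    by (auto simp: Y_def degree_monom_eq)
  define t where "t = coeff b 0"
  have bY: "b = Y + Aemb t"
  proof (rule poly_eqI)
    fix n
    show "coeff b n = coeff (Y + Aemb t) n"
    proof (cases "n \<le> 1")
      case True
      then have "n = 0 \<or> n = 1" by auto
      then show ?thesis using db by (auto simp: Y_def Aemb_def t_def coeff_monom)
    next
      case False
      then show ?thesis using db by (auto simp: Y_def Aemb_def coeff_monom coeff_eq_0 coeff_pCons split: nat.split)
    qed
  qed
  have "pCons 0 v = Lop h v + smult t v"
    using b unfolding bY Y_def
    by (simp add: Amult_Y_right Amult_add_left Amult_Y_left' Amult_Aemb_left)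
  then have mz: "map_poly (Dh h) v + smult t v = 0" by (simp add: Lop_def)
  have eqs: "h * pderiv (coeff v j) = - (t * coeff v j)" for j
  proof -
    have "coeff (map_poly (Dh h) v + smult t v) j = 0" using mz by simp
    then have "Dh h (coeff v j) + t * coeff v j = 0" by (simp add: coeff_map_poly)
    then show ?thesis by (simp add: Dh_def eq_neg_iff_add_eq_0)
  qed
  define N where "N = noncentral_factors h"
  define \<beta> where "\<beta> = (\<lambda>u. field_poly.multiplicity u (coeff v (degree v)) mod CHAR('a))"
  define f where "f = (\<Prod>u\<in>N. u ^ \<beta> u)"
  have finN: "finite N" unfolding N_def by (rule finite_ncf[OF h])
  have N1: "irreducible u \<and> lead_coeff u = 1 \<and> pderiv u \<noteq> 0" if "u \<in> N" for u
    using that Aemb_central_if[of u h] by (auto simp: N_def noncentral_factors_def)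
  have N2: "p \<in> N" if "irreducible p" "lead_coeff p = 1" "p dvd h" "pderiv p \<noteq> 0" for p
    using that Aemb_central_imp[OF h, of p] by (auto simp: N_def noncentral_factors_def)
  have main: "f dvd coeff v j \<and> pderiv (coeff v j div f) = 0" for j
    unfolding f_def
    by (rule poly_main[OF h eqs _ finN N1 N2, where n="degree v" and b=\<beta>]) (use lvnz \<beta>_def in auto)
  have fnz: "f \<noteq> 0" using main[of "degree v"] lvnz by auto
  define z where "z = map_poly (\<lambda>q. q div f) v"
  have cz: "coeff z j = coeff v j div f" for j by (simp add: z_def coeff_map_poly)
  have vz: "v = Amult h (Aemb f) z"
    unfolding Amult_Aemb_left
    by (rule poly_eqI) (simp add: cz dvd_mult_div_cancel main)
  have zc: "z \<in> Acenter h"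
  proof (rule central_of_gens)
    have "smult f (Amult h z [:[:0, 1:]:]) = smult f (Amult h [:[:0, 1:]:] z)"
    proof -
      have "smult f (Amult h z X) = Amult h v X"
        by (simp only: vz Amult_assoc) (simp add: Amult_Aemb_left)
      also have "\<dots> = Amult h X v" by (rule vX)
      also have "\<dots> = Amult h (Amult h X (Aemb f)) z" by (simp only: vz Amult_assoc)
      also have "Amult h X (Aemb f) = Amult h (Aemb f) X"
        unfolding X_def using Amult_Aemb_Aemb[of h "[:0,1:]" f] Amult_Aemb_Aemb[of h f "[:0,1:]"]
        by (simp add: Aemb_def mult.commute)
      also have "Amult h (Amult h (Aemb f) X) z = smult f (Amult h X z)"
        by (simp only: Amult_assoc) (simp add: Amult_Aemb_left)
      finally show ?thesis by (simp add: X_def)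
    qed
    then show "Amult h z [:[:0, 1:]:] = Amult h [:[:0, 1:]:] z"
      by (rule smult_cancel[OF fnz])
    have "map_poly (Dh h) z = 0"
      by (rule poly_eqI) (simp add: coeff_map_poly cz Dh_def main)
    then show "Amult h z (monom 1 1) = Amult h (monom 1 1) z"
      by (simp add: Amult_Y_right Amult_Y_left' Lop_def)
  qed
  have bound: "\<forall>u\<in>noncentral_factors h. 0 < CHAR('a) \<longrightarrow> \<beta> u < CHAR('a)"
    by (simp add: \<beta>_def)
  show ?thesis
    by (intro exI[of _ \<beta>] exI[of _ z]) (use zc bound vz in \<open>simp add: f_def N_def\<close>)
qed

end

lemma back_lemma:
  fixes h :: "'a::field poly"
  assumes h: "h \<noteq> 0" and zin: "z \<in> Acenter h"
  shows "Anormal h (Amult h (Aemb (\<Prod>u\<in>noncentral_factors h. u ^ bb u)) z)"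
proof -
  obtain w where "Dh h (\<Prod>u\<in>noncentral_factors h. u ^ bb u) = (\<Prod>u\<in>noncentral_factors h. u ^ bb u) * w"
    using logD_prod[OF finite_ncf[OF h], of h bb] by (auto simp: noncentral_factors_def)
  then show ?thesis by (rule normal_of[OF _ zin])
qed

theorem theorem7p2:
  fixes h :: "'a::field poly"
  assumes "h \<noteq> 0"
  shows "(\<forall>v. Anormal h v \<longleftrightarrow>
            (\<exists>\<beta>::'a poly \<Rightarrow> nat. \<exists>z \<in> Acenter h.
               v = Amult h (Aemb (\<Prod>u\<in>noncentral_factors h. u ^ \<beta> u)) z))
       \<and> (CHAR('a) > 0 \<longrightarrow>
          (\<forall>v. Anormal h v \<longleftrightarrow>
            (\<exists>\<beta>::'a poly \<Rightarrow> nat. \<exists>z \<in> Acenter h.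
               (\<forall>u\<in>noncentral_factors h. \<beta> u < CHAR('a)) \<and>
               v = Amult h (Aemb (\<Prod>u\<in>noncentral_factors h. u ^ \<beta> u)) z)))"
proof -
  show ?thesis
  proof (intro conjI allI impI iffI)
    fix v assume "Anormal h v"
    then show "\<exists>\<beta>::'a poly \<Rightarrow> nat. \<exists>z \<in> Acenter h.
               v = Amult h (Aemb (\<Prod>u\<in>noncentral_factors h. u ^ \<beta> u)) z"
      using forward[OF assms] by blast
  next
    fix v assume "\<exists>\<beta>::'a poly \<Rightarrow> nat. \<exists>z \<in> Acenter h.
               v = Amult h (Aemb (\<Prod>u\<in>noncentral_factors h. u ^ \<beta> u)) z"
    then show "Anormal h v" using back_lemma[OF assms] by blast
  next
    fix v assume c: "CHAR('a) > 0" and "Anormal h v"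
    then show "\<exists>\<beta>::'a poly \<Rightarrow> nat. \<exists>z \<in> Acenter h.
               (\<forall>u\<in>noncentral_factors h. \<beta> u < CHAR('a)) \<and>
               v = Amult h (Aemb (\<Prod>u\<in>noncentral_factors h. u ^ \<beta> u)) z"
      using forward[OF assms] by blast
  next
    fix v assume "\<exists>\<beta>::'a poly \<Rightarrow> nat. \<exists>z \<in> Acenter h.
               (\<forall>u\<in>noncentral_factors h. \<beta> u < CHAR('a)) \<and>
               v = Amult h (Aemb (\<Prod>u\<in>noncentral_factors h. u ^ \<beta> u)) z"
    then show "Anormal h v" using back_lemma[OF assms] by blast
  qed
qed


end
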